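(* Let $M>1$ and let $Q$ be an indefinite ternary quadratic form of Diophantine type $M$ with $\det Q=1$. Then there exists $0<\eta<1$ such that for every $R>10$ the set $\{v\in\Delta_Q\cap\mathcal{H}_{\eta,M}: R\le\|v\|<R^2\}$ is contained in the union of at most $12$ lines through the origin.
   Context: $\|\cdot\|$ is the supremum norm on $\mathbb{R}^3$; for quadratic forms $\|Q\|$ is the maximal absolute value of coefficients. $Q_0(v)=v_2^2-2v_1v_3$. Fix $g\in\mathrm{SL}_3(\mathbb{R})$ with $Q(v)=Q_0(gv)$ for all $v$ and set $\Delta_Q=g\mathbb{Z}^3$. $Q$ is of Diophantine type $M$ if there is $c>0$ with $\|Q-\rho Q'\|>c\|Q'\|^{-M}$ for every nonzero integral ternary quadratic form $Q'$, $\rho=(\det Q')^{-1/3}$. $\mathcal{H}_{\eta,M}=\{v\in\mathbb{R}^3:|Q_0(v)|<\eta\|v\|^{-50M}\}$. *)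

theory Defs
  imports "HOL-Analysis.Analysis"
begin

text \<open>Vectors of R^3 are real^3 with coordinates v$1, v$2, v$3.
 A ternary quadratic form is represented by its symmetric real 3x3 matrix A,
 with value v \<bullet> (A *v v).\<close>

definition supn :: "real^3 \<Rightarrow> real" where
  "supn v = Max (range (\<lambda>i. \<bar>v $ i\<bar>))"

definition qf :: "real^3^3 \<Rightarrow> real^3 \<Rightarrow> real" where
  "qf A v = v \<bullet> (A *v v)"

definition symmetric_form :: "real^3^3 \<Rightarrow> bool" where
  "symmetric_form A \<longleftrightarrow> transpose A = A"

text \<open>Coefficients of the polynomial sum_i A_ii v_i^2 + sum_{i<j} 2 A_ij v_i v_j.\<close>
definition qcoeffs :: "real^3^3 \<Rightarrow> real set" where
  "qcoeffs A = {A $ i $ i | i. True} \<union> {2 * A $ i $ j | i j. i \<noteq> j}"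

definition qnorm :: "real^3^3 \<Rightarrow> real" where
  "qnorm A = Max (abs ` qcoeffs A)"

definition integral_form :: "real^3^3 \<Rightarrow> bool" where
  "integral_form A \<longleftrightarrow> symmetric_form A \<and> qcoeffs A \<subseteq> \<int>"

text \<open>Determinant of a form, normalised so that Q0 has determinant 1.\<close>
definition qdet :: "real^3^3 \<Rightarrow> real" where
  "qdet A = - det A"

definition Q0 :: "real^3 \<Rightarrow> real" where
  "Q0 v = (v $ 2)^2 - 2 * (v $ 1) * (v $ 3)"

definition indefinite :: "real^3^3 \<Rightarrow> bool" where
  "indefinite A \<longleftrightarrow> (\<exists>v w. qf A v > 0 \<and> qf A w < 0)"

definition diophantine_type :: "real^3^3 \<Rightarrow> real \<Rightarrow> bool" where
  "diophantine_type Q M \<longleftrightarrow> (\<exists>c>0. \<forall>Q'. integral_form Q' \<and> Q' \<noteq> 0 \<and> qdet Q' \<noteq> 0 \<longrightarrow>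
      qnorm (Q - root 3 (inverse (qdet Q')) *\<^sub>R Q') > c * qnorm Q' powr (- M))"

definition lattice_of :: "real^3^3 \<Rightarrow> (real^3) set" where
  "lattice_of g = {g *v z | z. \<forall>i. z $ i \<in> \<int>}"

definition H_set :: "real \<Rightarrow> real \<Rightarrow> (real^3) set" where
  "H_set \<eta> M = {v. \<bar>Q0 v\<bar> < \<eta> * supn v powr (- 50 * M)}"

definition line_through_origin :: "real^3 \<Rightarrow> (real^3) set" where
  "line_through_origin d = {t *\<^sub>R d | t. True}"

end

theory Submission
  imports Defs
begin

definition bf :: "real^3^3 \<Rightarrow> real^3 \<Rightarrow> real^3 \<Rightarrow> real" where
  "bf A x y = x \<bullet> (A *v y)"

lemma bf3: "bf A x y =
  x$1*A$1$1*y$1 + x$1*A$1$2*y$2 + x$1*A$1$3*y$3 +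
  x$2*A$2$1*y$1 + x$2*A$2$2*y$2 + x$2*A$2$3*y$3 +
  x$3*A$3$1*y$1 + x$3*A$3$2*y$2 + x$3*A$3$3*y$3"
  by (simp add: bf_def inner_vec_def matrix_vector_mult_def sum_3 algebra_simps)

lemma qf_bf: "qf A x = bf A x x"
  by (simp add: qf_def bf_def)

lemma sym_entries: "symmetric_form A \<Longrightarrow> A$i$j = A$j$i"
proof -
  assume "symmetric_form A"
  then have "transpose A $ i $ j = A $ i $ j" by (simp add: symmetric_form_def)
  then show ?thesis by (simp add: transpose_def)
qed

lemma sym3: "symmetric_form A \<Longrightarrow> A$2$1 = A$1$2 \<and> A$3$1 = A$1$3 \<and> A$3$2 = A$2$3"
  using sym_entries[of A 2 1] sym_entries[of A 3 1] sym_entries[of A 3 2] by simp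

lemma bf_sym: "symmetric_form A \<Longrightarrow> bf A x y = bf A y x"
  using sym3[of A] by (simp add: bf3 algebra_simps)

lemma bf_add1: "bf A (x + y) z = bf A x z + bf A y z"
  by (simp add: bf3 algebra_simps)
lemma bf_add2: "bf A z (x + y) = bf A z x + bf A z y"
  by (simp add: bf3 algebra_simps)
lemma bf_scale1: "bf A (c *\<^sub>R x) z = c * bf A x z"
  by (simp add: bf3 algebra_simps)
lemma bf_scale2: "bf A z (c *\<^sub>R x) = c * bf A z x"
  by (simp add: bf3 algebra_simps)

lemma qf_add: "symmetric_form A \<Longrightarrow> qf A (x + y) = qf A x + 2 * bf A x y + qf A y"
  by (simp add: qf_bf bf_add1 bf_add2 bf_sym[of A y x])

lemma qf_scale: "qf A (c *\<^sub>R x) = c^2 * qf A x"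
  by (simp add: qf_bf bf_scale1 bf_scale2 power2_eq_square)

lemma qf_lin2: "symmetric_form A \<Longrightarrow>
   qf A (a *\<^sub>R x + b *\<^sub>R y) = a^2 * qf A x + 2*a*b * bf A x y + b^2 * qf A y"
  by (simp add: qf_add qf_scale bf_scale1 bf_scale2)

lemma qf_lin3: "symmetric_form A \<Longrightarrow>
   qf A (a *\<^sub>R x + b *\<^sub>R y + c *\<^sub>R z) = a^2 * qf A x + b^2 * qf A y + c^2 * qf A z
     + 2*a*b * bf A x y + 2*a*c * bf A x z + 2*b*c * bf A y z"
  by (simp add: qf_add qf_scale bf_scale1 bf_scale2 bf_add1 bf_add2 algebra_simps)

definition cr :: "real^3 \<Rightarrow> real^3 \<Rightarrow> real^3" where
  "cr x y = vector [x$2*y$3 - x$3*y$2, x$3*y$1 - x$1*y$3, x$1*y$2 - x$2*y$1]"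

definition dt :: "real^3 \<Rightarrow> real^3 \<Rightarrow> real" where
  "dt x y = x$1*y$1 + x$2*y$2 + x$3*y$3"

definition det3 :: "real^3 \<Rightarrow> real^3 \<Rightarrow> real^3 \<Rightarrow> real" where
  "det3 x y z = dt (cr x y) z"

lemma cramer: "det3 z1 z2 z3 *\<^sub>R x = det3 x z2 z3 *\<^sub>R z1 + det3 z1 x z3 *\<^sub>R z2 + det3 z1 z2 x *\<^sub>R z3"
  by (simp add: vec_eq_iff forall_3 det3_def dt_def cr_def algebra_simps)

lemma plane_id: "dt (cr z1 z2) (cr z1 z2) *\<^sub>R z3 =
   dt (cr z3 z2) (cr z1 z2) *\<^sub>R z1 + dt (cr z1 z3) (cr z1 z2) *\<^sub>R z2 + dt (cr z1 z2) z3 *\<^sub>R cr z1 z2"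
  by (simp add: vec_eq_iff forall_3 dt_def cr_def algebra_simps)

lemma plucker: "det3 z4 z2 z3 * det3 z1 z5 z3 - det3 z5 z2 z3 * det3 z1 z4 z3 = det3 z1 z2 z3 * det3 z4 z5 z3"
  by (simp add: det3_def dt_def cr_def algebra_simps)

lemma int_abs_ge1: "(x::real) \<in> \<int> \<Longrightarrow> x \<noteq> 0 \<Longrightarrow> 1 \<le> \<bar>x\<bar>"
proof -
  assume "x \<in> \<int>" "x \<noteq> 0"
  then obtain n where n: "x = of_int n" "n \<noteq> 0" by (auto elim: Ints_cases)
  then have "1 \<le> \<bar>n\<bar>" by linarith
  then show ?thesis using n by (metis of_int_1_le_iff of_int_abs)
qed

definition intv :: "real^3 \<Rightarrow> bool" where "intv z \<longleftrightarrow> (\<forall>i. z$i \<in> \<int>)"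
definition vb :: "real^3 \<Rightarrow> real \<Rightarrow> bool" where "vb z X \<longleftrightarrow> (\<forall>i. \<bar>z$i\<bar> \<le> X)"

lemma intv_cr: "intv x \<Longrightarrow> intv y \<Longrightarrow> intv (cr x y)"
  by (auto simp: intv_def cr_def forall_3)
lemma int_dt: "intv x \<Longrightarrow> intv y \<Longrightarrow> dt x y \<in> \<int>"
  by (auto simp: intv_def dt_def)
lemma int_det3: "intv x \<Longrightarrow> intv y \<Longrightarrow> intv z \<Longrightarrow> det3 x y z \<in> \<int>"
  by (simp add: det3_def int_dt intv_cr)

lemma abs3: "\<bar>a\<bar> \<le> p \<Longrightarrow> \<bar>b\<bar> \<le> q \<Longrightarrow> \<bar>c\<bar> \<le> r \<Longrightarrow> \<bar>(a::real)*b*c\<bar> \<le> p*q*r"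
  by (simp add: abs_mult mult_mono' order_trans[OF abs_ge_zero])

lemma abs2: "\<bar>a\<bar> \<le> p \<Longrightarrow> \<bar>b\<bar> \<le> q \<Longrightarrow> \<bar>(a::real)*b\<bar> \<le> p*q"
  by (simp add: abs_mult mult_mono' order_trans[OF abs_ge_zero])

lemma vb_cr: "vb x X \<Longrightarrow> vb y Y \<Longrightarrow> vb (cr x y) (2*X*Y)"
proof -
  assume a: "vb x X" "vb y Y"
  have h: "\<bar>x$i*y$j - x$j*y$i\<bar> \<le> 2*X*Y" for i j
  proof -
    have "\<bar>x$i*y$j\<bar> \<le> X*Y" "\<bar>x$j*y$i\<bar> \<le> X*Y" using a by (auto simp: vb_def intro!: abs2)
    then show ?thesis by linarith
  qed
  show ?thesis unfolding vb_def cr_def forall_3 using h by simp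
qed

lemma dt_bound: "vb x X \<Longrightarrow> vb y Y \<Longrightarrow> \<bar>dt x y\<bar> \<le> 3*X*Y"
proof -
  assume a: "vb x X" "vb y Y"
  have "\<bar>x$i*y$i\<bar> \<le> X*Y" for i using a by (auto simp: vb_def intro!: abs2)
  from this[of 1] this[of 2] this[of 3] show ?thesis unfolding dt_def by linarith
qed

lemma bf_bound: "(\<forall>i j. \<bar>A$i$j\<bar> \<le> a) \<Longrightarrow> vb x X \<Longrightarrow> vb y Y \<Longrightarrow> \<bar>bf A x y\<bar> \<le> 9*X*a*Y"
proof -
  assume a: "\<forall>i j. \<bar>A$i$j\<bar> \<le> a" "vb x X" "vb y Y"
  have h: "\<bar>x$i*A$i$j*y$j\<bar> \<le> X*a*Y" for i j using a by (auto simp: vb_def intro!: abs3)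
  have e: "bf A x y = (\<Sum>i\<in>UNIV. \<Sum>j\<in>UNIV. x$i*A$i$j*y$j)"
    by (simp add: bf_def inner_vec_def matrix_vector_mult_def sum_distrib_left mult.assoc)
  have "\<bar>\<Sum>i\<in>UNIV. \<Sum>j\<in>UNIV. x$i*A$i$j*y$j\<bar> \<le> (\<Sum>i\<in>(UNIV::3 set). \<Sum>j\<in>(UNIV::3 set). \<bar>x$i*A$i$j*y$j\<bar>)"
    by (rule order_trans[OF sum_abs sum_mono[OF sum_abs]])
  also have "\<dots> \<le> (\<Sum>i\<in>(UNIV::3 set). \<Sum>j\<in>(UNIV::3 set). X*a*Y)"
    by (intro sum_mono h)
  also have "\<dots> = 9*X*a*Y" by simp
  finally show ?thesis using e by simp
qed

lemma vb_mono: "vb x X \<Longrightarrow> X \<le> Y \<Longrightarrow> vb x Y"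
  unfolding vb_def using order_trans by blast

lemma cr_zero_par: assumes "cr x y = 0" "x \<noteq> 0" shows "\<exists>t. y = t *\<^sub>R x"
proof -
  have e: "x$2*y$3 = x$3*y$2" "x$3*y$1 = x$1*y$3" "x$1*y$2 = x$2*y$1"
    using assms(1) unfolding cr_def vec_eq_iff forall_3 by auto
  obtain k where k: "x$k \<noteq> 0" using assms(2) by (metis vec_eq_iff zero_index)
  have "k = 1 \<or> k = 2 \<or> k = 3" using exhaust_3 by auto
  then show ?thesis
  proof (elim disjE)
    assume "k = 1"
    with k have "y = (y$1/x$1) *\<^sub>R x" using e
      by (auto simp: vec_eq_iff forall_3 field_simps)
    then show ?thesis by blast
  next
    assume "k = 2"
    with k have "y = (y$2/x$2) *\<^sub>R x" using e
      by (auto simp: vec_eq_iff forall_3 field_simps)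
    then show ?thesis by blast
  next
    assume "k = 3"
    with k have "y = (y$3/x$3) *\<^sub>R x" using e
      by (auto simp: vec_eq_iff forall_3 field_simps)
    then show ?thesis by blast
  qed
qed

lemma gram_entry: "(X ** Q ** transpose X) $ i $ j = bf Q (X$i) (X$j)"
  by (simp add: matrix_matrix_mult_def transpose_def bf3 sum_3 algebra_simps)

lemma det_rows: "det (vector [x, y, z] :: real^3^3) = det3 x y z"
  by (simp add: det_3 det3_def dt_def cr_def algebra_simps)

lemma det_small:
  fixes G :: "real^3^3"
  assumes "\<bar>G$1$1\<bar> \<le> d" "\<bar>G$1$2\<bar> \<le> d" "\<bar>G$2$1\<bar> \<le> d" "\<bar>G$2$2\<bar> \<le> d"
    and "\<forall>i j. \<bar>G$i$j\<bar> \<le> X"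
  shows "\<bar>det G\<bar> \<le> 6*d*X*X"
proof -
  have X: "\<bar>G$i$j\<bar> \<le> X" for i j using assms(5) by auto
  have t1: "\<bar>G$1$1 * G$2$2 * G$3$3\<bar> \<le> d*X*X" by (rule abs3[OF assms(1) X X])
  have t2: "\<bar>G$1$2 * G$2$3 * G$3$1\<bar> \<le> d*X*X" by (rule abs3[OF assms(2) X X])
  have t3: "\<bar>G$1$3 * G$2$1 * G$3$2\<bar> \<le> X*d*X" by (rule abs3[OF X assms(3) X])
  have t4: "\<bar>G$1$1 * G$2$3 * G$3$2\<bar> \<le> d*X*X" by (rule abs3[OF assms(1) X X])
  have t5: "\<bar>G$1$2 * G$2$1 * G$3$3\<bar> \<le> d*X*X" by (rule abs3[OF assms(2) X X])
  have t6: "\<bar>G$1$3 * G$2$2 * G$3$1\<bar> \<le> X*d*X" by (rule abs3[OF X assms(4) X])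
  show ?thesis unfolding det_3 using t1 t2 t3 t4 t5 t6 by (simp add: algebra_simps)
qed

lemma rows_vb: "vb z1 X \<Longrightarrow> vb z2 X \<Longrightarrow> vb z3 X \<Longrightarrow> vb ((vector [z1,z2,z3]::real^3^3) $ i) X"
  using exhaust_3[of i] by auto

lemma step1:
  fixes Q :: "real^3^3" and z1 z2 z3 :: "real^3"
  assumes symQ: "symmetric_form Q" and dQ: "det Q = -1"
    and qm: "\<forall>i j. \<bar>Q$i$j\<bar> \<le> qm"
    and Zb: "1 \<le> Zb" and iz: "intv z1" "intv z2" "intv z3"
    and bz: "vb z1 Zb" "vb z2 Zb" "vb z3 Zb"
    and eq: "\<bar>qf Q z1\<bar> \<le> \<epsilon>" "\<bar>qf Q z2\<bar> \<le> \<epsilon>" "\<bar>qf Q z3\<bar> \<le> \<epsilon>"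
    and np: "\<forall>t. z1 \<noteq> t *\<^sub>R z2" "\<forall>t. z2 \<noteq> t *\<^sub>R z1" "\<forall>t. z3 \<noteq> t *\<^sub>R z1" "\<forall>t. z3 \<noteq> t *\<^sub>R z2"
    and cop: "det3 z1 z2 z3 = 0"
  shows "1 \<le> 6 * (216*Zb^8*\<epsilon>) * (36*qm*Zb^4 + 216*Zb^8*\<epsilon>) * (36*qm*Zb^4 + 216*Zb^8*\<epsilon>)"
proof -
  define c where "c = cr z1 z2"
  have z1nz: "z1 \<noteq> 0" using np(1) by (metis scale_zero_left)
  have cnz: "c \<noteq> 0"
  proof
    assume "c = 0"
    then obtain t where "z2 = t *\<^sub>R z1" using cr_zero_par[of z1 z2] z1nz c_def by auto
    then show False using np(2) by blast
  qed
  define N where "N = dt c c"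
  define A where "A = dt (cr z3 z2) c"
  define B where "B = dt (cr z1 z3) c"
  have ic: "intv c" unfolding c_def by (rule intv_cr[OF iz(1,2)])
  have NZ: "N \<in> \<int>" "A \<in> \<int>" "B \<in> \<int>" unfolding N_def A_def B_def
    using ic iz by (auto intro!: int_dt intv_cr)
  have Npos: "N > 0"
  proof -
    obtain k where k: "c$k \<noteq> 0" using cnz by (metis vec_eq_iff zero_index)
    have "N = (c$1)^2 + (c$2)^2 + (c$3)^2" unfolding N_def dt_def by (simp add: power2_eq_square)
    moreover have "(c$1)^2 + (c$2)^2 + (c$3)^2 > 0" using k exhaust_3[of k]
      by (metis add_nonneg_nonneg add_pos_nonneg add_nonneg_pos zero_le_power2 zero_less_power2)
    ultimately show ?thesis by simp
  qed
  have N1: "1 \<le> N" using int_abs_ge1[OF NZ(1)] Npos by simp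
  have dz: "dt c z3 = 0" using cop unfolding det3_def c_def .
  have pid: "N *\<^sub>R z3 = A *\<^sub>R z1 + B *\<^sub>R z2"
    using plane_id[of z1 z2 z3] dz unfolding N_def A_def B_def c_def by simp
  have Anz: "A \<noteq> 0"
  proof
    assume "A = 0"
    then have "N *\<^sub>R z3 = B *\<^sub>R z2" using pid by simp
    then have "z3 = (B / N) *\<^sub>R z2" using Npos
      by (metis (no_types, lifting) divideR_right less_irrefl scaleR_scaleR divide_inverse_commute
          inverse_eq_divide)
    then show False using np(4) by blast
  qed
  have Bnz: "B \<noteq> 0"
  proof
    assume "B = 0"
    then have "N *\<^sub>R z3 = A *\<^sub>R z1" using pid by simp
    then have "z3 = (A / N) *\<^sub>R z1" using Npos
      by (metis (no_types, lifting) divideR_right less_irrefl scaleR_scaleR divide_inverse_commute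
          inverse_eq_divide)
    then show False using np(3) by blast
  qed
  define b where "b = bf Q z1 z2"
  have qeq: "N^2 * qf Q z3 = A^2 * qf Q z1 + 2*A*B*b + B^2 * qf Q z2"
  proof -
    have "qf Q (N *\<^sub>R z3) = N^2 * qf Q z3" by (rule qf_scale)
    moreover have "qf Q (A *\<^sub>R z1 + B *\<^sub>R z2) = A^2 * qf Q z1 + 2*A*B*b + B^2 * qf Q z2"
      unfolding b_def by (rule qf_lin2[OF symQ])
    ultimately show ?thesis using pid by simp
  qed
  have vc: "vb c (2*Zb*Zb)" unfolding c_def by (rule vb_cr[OF bz(1,2)])
  have v32: "vb (cr z3 z2) (2*Zb*Zb)" by (rule vb_cr[OF bz(3,2)])
  have v13: "vb (cr z1 z3) (2*Zb*Zb)" by (rule vb_cr[OF bz(1,3)])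
  have bN: "\<bar>N\<bar> \<le> 12*Zb^4" using dt_bound[OF vc vc] unfolding N_def by (simp add: power4_eq_xxxx algebra_simps)
  have bA: "\<bar>A\<bar> \<le> 12*Zb^4" using dt_bound[OF v32 vc] unfolding A_def by (simp add: power4_eq_xxxx algebra_simps)
  have bB: "\<bar>B\<bar> \<le> 12*Zb^4" using dt_bound[OF v13 vc] unfolding B_def by (simp add: power4_eq_xxxx algebra_simps)
  have e0: "0 \<le> \<epsilon>" using eq(1) by linarith
  have sq: "x^2 \<le> 144*Zb^8" if "\<bar>x\<bar> \<le> 12*Zb^4" for x :: real
  proof -
    have "x^2 = \<bar>x\<bar>^2" by simp
    also have "\<dots> \<le> (12*Zb^4)^2" by (rule power_mono[OF that abs_ge_zero])
    finally show ?thesis by (simp add: power_mult_distrib power2_eq_square power_add[symmetric])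
  qed
  have t1: "\<bar>N^2 * qf Q z3\<bar> \<le> 144*Zb^8*\<epsilon>"
    unfolding abs_mult using mult_mono[OF sq[OF bN] eq(3)] e0 by simp
  have t2: "\<bar>A^2 * qf Q z1\<bar> \<le> 144*Zb^8*\<epsilon>"
    unfolding abs_mult using mult_mono[OF sq[OF bA] eq(1)] e0 by simp
  have t3: "\<bar>B^2 * qf Q z2\<bar> \<le> 144*Zb^8*\<epsilon>"
    unfolding abs_mult using mult_mono[OF sq[OF bB] eq(2)] e0 by simp
  have "\<bar>2*A*B*b\<bar> \<le> 432*Zb^8*\<epsilon>" using qeq t1 t2 t3 by linarith
  moreover have AB1: "1 \<le> \<bar>A*B\<bar>" using int_abs_ge1[of "A*B"] NZ Anz Bnz by simp
  moreover have "\<bar>b\<bar> \<le> \<bar>A*B\<bar>*\<bar>b\<bar>" using mult_right_mono[OF AB1 abs_ge_zero[of b]] by simp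
  moreover have "\<bar>A*B\<bar>*\<bar>b\<bar> = \<bar>2*A*B*b\<bar>/2" by (simp add: abs_mult)
  ultimately have bb: "\<bar>b\<bar> \<le> 216*Zb^8*\<epsilon>" by linarith
  define \<delta> where "\<delta> = 216*Zb^8*\<epsilon>"
  have Zb8: "1 \<le> Zb^8" using Zb by simp
  have ed: "\<epsilon> \<le> \<delta>"
  proof -
    have "1 * \<epsilon> \<le> (216*Zb^8) * \<epsilon>" by (rule mult_right_mono) (use Zb8 e0 in auto)
    then show ?thesis unfolding \<delta>_def by simp
  qed
  define Zr where "Zr = (vector [z1, z2, c] :: real^3^3)"
  define G where "G = Zr ** Q ** transpose Zr"
  have Gij: "G$i$j = bf Q (Zr$i) (Zr$j)" for i j unfolding G_def by (rule gram_entry)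
  have detG: "det G = -(N^2)"
  proof -
    have "det Zr = N" unfolding Zr_def det_rows det3_def N_def c_def ..
    then show ?thesis unfolding G_def det_mul det_transpose dQ by (simp add: power2_eq_square)
  qed
  have Zb2: "Zb \<le> 2*Zb*Zb"
  proof -
    have "Zb * 1 \<le> Zb * (2*Zb)" by (rule mult_left_mono) (use Zb in auto)
    then show ?thesis by (simp add: algebra_simps)
  qed
  have vr: "vb (Zr$i) (2*Zb*Zb)" for i unfolding Zr_def
    by (rule rows_vb[OF vb_mono[OF bz(1) Zb2] vb_mono[OF bz(2) Zb2] vc])
  define X where "X = 36*qm*Zb^4 + \<delta>"
  have dpos: "0 \<le> \<delta>" using e0 ed by linarith
  have GX: "\<forall>i j. \<bar>G$i$j\<bar> \<le> X"
  proof (intro allI)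
    fix i j
    have "\<bar>G$i$j\<bar> \<le> 9*(2*Zb*Zb)*qm*(2*Zb*Zb)" unfolding Gij by (rule bf_bound[OF qm vr vr])
    also have "\<dots> = 36*qm*Zb^4" by (simp add: power4_eq_xxxx)
    finally show "\<bar>G$i$j\<bar> \<le> X" unfolding X_def using dpos by linarith
  qed
  have g11: "\<bar>G$1$1\<bar> \<le> \<delta>" using Gij[of 1 1] eq(1) ed unfolding Zr_def qf_bf by simp
  have g22: "\<bar>G$2$2\<bar> \<le> \<delta>" using Gij[of 2 2] eq(2) ed unfolding Zr_def qf_bf by simp
  have g12: "\<bar>G$1$2\<bar> \<le> \<delta>" using Gij[of 1 2] bb unfolding Zr_def b_def \<delta>_def by simp
  have g21: "\<bar>G$2$1\<bar> \<le> \<delta>" using Gij[of 2 1] bb bf_sym[OF symQ, of z2 z1] unfolding Zr_def b_def \<delta>_def by simp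
  have "\<bar>det G\<bar> \<le> 6*\<delta>*X*X" by (rule det_small[OF g11 g12 g21 g22 GX])
  moreover have "1 \<le> \<bar>det G\<bar>" unfolding detG using N1
    by (simp add: one_le_power)
  ultimately show ?thesis unfolding X_def \<delta>_def by linarith
qed

definition sp :: "real^3 \<Rightarrow> real^3 \<Rightarrow> real^3^3" where
  "sp a b = (\<chi> i j. (a$i*b$j + b$i*a$j)/2)"

lemma qf_sp: "qf (sp a b) x = dt a x * dt b x"
  by (simp add: qf_bf bf3 sp_def dt_def algebra_simps)

lemma sym_sp: "symmetric_form (sp a b)"
  by (simp add: symmetric_form_def sp_def transpose_def vec_eq_iff algebra_simps)

lemma qf_plus: "qf (A + B) x = qf A x + qf B x"
  by (simp add: qf_bf bf3 algebra_simps)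
lemma qf_minus: "qf (A - B) x = qf A x - qf B x"
  by (simp add: qf_bf bf3 algebra_simps)
lemma qf_smult: "qf (c *\<^sub>R A) x = c * qf A x"
  by (simp add: qf_bf bf3 algebra_simps)
lemma qf_zero_mat: "qf 0 x = 0"
  by (simp add: qf_bf bf3)

lemma sym_plus: "symmetric_form A \<Longrightarrow> symmetric_form B \<Longrightarrow> symmetric_form (A + B)"
  by (simp add: symmetric_form_def transpose_def vec_eq_iff)
lemma sym_minus: "symmetric_form A \<Longrightarrow> symmetric_form B \<Longrightarrow> symmetric_form (A - B)"
  by (simp add: symmetric_form_def transpose_def vec_eq_iff)
lemma sym_smult: "symmetric_form A \<Longrightarrow> symmetric_form (c *\<^sub>R A)"
  by (simp add: symmetric_form_def transpose_def vec_eq_iff)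

lemma dt_cr: "dt (cr a b) x = det3 a b x"
  by (simp add: det3_def)

lemma det3_swap12: "det3 y x z = - det3 x y z"
  by (simp add: det3_def dt_def cr_def algebra_simps)
lemma det3_swap23: "det3 x z y = - det3 x y z"
  by (simp add: det3_def dt_def cr_def algebra_simps)
lemma det3_rep: "det3 x x z = 0" "det3 x y x = 0" "det3 y x x = 0"
  by (simp_all add: det3_def dt_def cr_def algebra_simps)
lemma det3_add3: "det3 x y (a + b) = det3 x y a + det3 x y b"
  by (simp add: det3_def dt_def cr_def algebra_simps)

lemma qf_zero:
  assumes "symmetric_form H" "\<forall>x. qf H x = 0" shows "H = 0"
proof -
  have s: "H$2$1 = H$1$2" "H$3$1 = H$1$3" "H$3$2 = H$2$3" using sym3[OF assms(1)] by auto
  have q: "qf H (vector [a,b,c]) = 0" for a b c using assms(2) by blast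
  have h11: "H$1$1 = 0" using q[of 1 0 0] by (simp add: qf_bf bf3)
  have h22: "H$2$2 = 0" using q[of 0 1 0] by (simp add: qf_bf bf3)
  have h33: "H$3$3 = 0" using q[of 0 0 1] by (simp add: qf_bf bf3)
  have h12: "H$1$2 = 0" using q[of 1 1 0] h11 h22 s by (simp add: qf_bf bf3)
  have h13: "H$1$3 = 0" using q[of 1 0 1] h11 h33 s by (simp add: qf_bf bf3)
  have h23: "H$2$3 = 0" using q[of 0 1 1] h22 h33 s by (simp add: qf_bf bf3)
  show ?thesis using h11 h22 h33 h12 h13 h23 s by (simp add: vec_eq_iff forall_3)
qed

lemma uniq:
  assumes symH: "symmetric_form H"
    and q: "qf H z1 = 0" "qf H z2 = 0" "qf H z3 = 0" "qf H z4 = 0" "qf H z5 = 0" "qf H (z1 + z2) = 0"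
    and nz: "det3 z1 z2 z3 \<noteq> 0" "det3 z1 z2 z4 \<noteq> 0" "det3 z1 z2 z5 \<noteq> 0" "det3 z4 z5 z3 \<noteq> 0"
  shows "H = 0"
proof -
  have b12: "bf H z1 z2 = 0" using qf_add[OF symH, of z1 z2] q by simp
  define d where "d = det3 z1 z2 z3"
  define l1 where "l1 x = det3 x z2 z3" for x
  define l2 where "l2 x = det3 z1 x z3" for x
  define l3 where "l3 x = det3 z1 z2 x" for x
  define b13 where "b13 = bf H z1 z3"
  define b23 where "b23 = bf H z2 z3"
  have key: "d^2 * qf H x = 2 * l3 x * (l1 x * b13 + l2 x * b23)" for x
  proof -
    have "qf H (d *\<^sub>R x) = d^2 * qf H x" by (rule qf_scale)
    moreover have "d *\<^sub>R x = l1 x *\<^sub>R z1 + l2 x *\<^sub>R z2 + l3 x *\<^sub>R z3"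
      unfolding d_def l1_def l2_def l3_def by (rule cramer)
    ultimately have "d^2 * qf H x = qf H (l1 x *\<^sub>R z1 + l2 x *\<^sub>R z2 + l3 x *\<^sub>R z3)" by simp
    also have "\<dots> = 2 * l3 x * (l1 x * b13 + l2 x * b23)"
      unfolding qf_lin3[OF symH] using q b12 unfolding b13_def b23_def by (simp add: algebra_simps)
    finally show ?thesis .
  qed
  have e4: "l1 z4 * b13 + l2 z4 * b23 = 0"
    using key[of z4] q(4) nz(2) unfolding l3_def by simp
  have e5: "l1 z5 * b13 + l2 z5 * b23 = 0"
    using key[of z5] q(5) nz(3) unfolding l3_def by simp
  have pl: "l1 z4 * l2 z5 - l1 z5 * l2 z4 = d * det3 z4 z5 z3"
    unfolding l1_def l2_def d_def by (rule plucker)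
  have pnz: "l1 z4 * l2 z5 - l1 z5 * l2 z4 \<noteq> 0" unfolding pl d_def using nz(1,4) by simp
  have "b13 * (l1 z4 * l2 z5 - l1 z5 * l2 z4) = l2 z5 * (l1 z4 * b13 + l2 z4 * b23) - l2 z4 * (l1 z5 * b13 + l2 z5 * b23)"
    by (simp add: algebra_simps)
  then have "b13 = 0" using e4 e5 pnz by simp
  have "b23 * (l1 z4 * l2 z5 - l1 z5 * l2 z4) = l1 z4 * (l1 z5 * b13 + l2 z5 * b23) - l1 z5 * (l1 z4 * b13 + l2 z4 * b23)"
    by (simp add: algebra_simps)
  then have "b23 = 0" using e4 e5 pnz by simp
  have "\<forall>x. qf H x = 0"
  proof
    fix x
    have "d^2 * qf H x = 0" using key[of x] \<open>b13 = 0\<close> \<open>b23 = 0\<close> by simp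
    then show "qf H x = 0" using nz(1) unfolding d_def by simp
  qed
  then show ?thesis by (rule qf_zero[OF symH])
qed

lemma qcoeffs_eq: "qcoeffs A = range (\<lambda>i. A$i$i) \<union> (\<lambda>(i,j). 2*A$i$j) ` {(i,j). i \<noteq> j}"
  unfolding qcoeffs_def by auto

lemma qcoeffs_fin: "finite (qcoeffs A)"
  unfolding qcoeffs_eq by simp

lemma qnorm_le:
  assumes "\<forall>i j. \<bar>A$i$j\<bar> \<le> X" "0 \<le> X" shows "qnorm A \<le> 2*X"
proof -
  have ne: "abs ` qcoeffs A \<noteq> {}" unfolding qcoeffs_def by auto
  have "\<forall>y\<in>abs ` qcoeffs A. y \<le> 2*X"
  proof
    fix y assume "y \<in> abs ` qcoeffs A"
    then obtain i j where "y = \<bar>A$i$i\<bar> \<or> y = \<bar>2*A$i$j\<bar>" unfolding qcoeffs_def by auto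
    then show "y \<le> 2*X" using assms(1)[rule_format, of i i] assms(1)[rule_format, of i j] assms(2)
      by auto
  qed
  then show ?thesis unfolding qnorm_def using Max_le_iff[OF finite_imageI[OF qcoeffs_fin] ne] by blast
qed

lemma qnorm_ge: "\<bar>A$i$i\<bar> \<le> qnorm A" "i \<noteq> j \<Longrightarrow> \<bar>2*A$i$j\<bar> \<le> qnorm A"
proof -
  show "\<bar>A$i$i\<bar> \<le> qnorm A" unfolding qnorm_def
    by (rule Max_ge[OF finite_imageI[OF qcoeffs_fin]]) (auto simp: qcoeffs_def)
  assume "i \<noteq> j"
  then show "\<bar>2*A$i$j\<bar> \<le> qnorm A" unfolding qnorm_def
    by (intro Max_ge[OF finite_imageI[OF qcoeffs_fin]]) (auto simp: qcoeffs_def)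
qed

lemma qnorm_pos: assumes "A \<noteq> 0" shows "0 < qnorm A"
proof -
  obtain i j where ij: "A$i$j \<noteq> 0" using assms by (metis vec_eq_iff zero_index)
  show ?thesis
  proof (cases "i = j")
    case True then show ?thesis using qnorm_ge(1)[of A i] ij by auto
  next
    case False then show ?thesis using qnorm_ge(2)[of i j A] ij by auto
  qed
qed

lemma det_smult: "det (c *\<^sub>R (A::real^3^3)) = c^3 * det A"
  by (simp add: det_3 algebra_simps power3_eq_cube)

lemma prod3_diff:
  fixes x y z x' y' z' :: real
  assumes "\<bar>y\<bar> \<le> a" "\<bar>z\<bar> \<le> a" "\<bar>x'\<bar> \<le> a" "\<bar>y'\<bar> \<le> a"
    "\<bar>x - x'\<bar> \<le> w" "\<bar>y - y'\<bar> \<le> w" "\<bar>z - z'\<bar> \<le> w"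
  shows "\<bar>x*y*z - x'*y'*z'\<bar> \<le> 3*a*a*w"
proof -
  have e: "x*y*z - x'*y'*z' = (x-x')*y*z + x'*(y-y')*z + x'*y'*(z-z')" by (simp add: algebra_simps)
  have "\<bar>(x-x')*y*z\<bar> \<le> w*a*a" by (rule abs3) (use assms in auto)
  moreover have "\<bar>x'*(y-y')*z\<bar> \<le> a*w*a" by (rule abs3) (use assms in auto)
  moreover have "\<bar>x'*y'*(z-z')\<bar> \<le> a*a*w" by (rule abs3) (use assms in auto)
  ultimately show ?thesis unfolding e by (simp add: algebra_simps)
qed

lemma det_diff:
  fixes A B :: "real^3^3"
  assumes "\<forall>i j. \<bar>A$i$j\<bar> \<le> a" "\<forall>i j. \<bar>B$i$j\<bar> \<le> a" "\<forall>i j. \<bar>A$i$j - B$i$j\<bar> \<le> w"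
  shows "\<bar>det A - det B\<bar> \<le> 18*a*a*w"
proof -
  have p: "\<bar>A$i$j*A$k$l*A$m$n - B$i$j*B$k$l*B$m$n\<bar> \<le> 3*a*a*w" for i j k l m n
    by (rule prod3_diff) (use assms in auto)
  show ?thesis unfolding det_3
    using p[of 1 1 2 2 3 3] p[of 1 2 2 3 3 1] p[of 1 3 2 1 3 2] p[of 1 1 2 3 3 2] p[of 1 2 2 1 3 3]
      p[of 1 3 2 2 3 1]
    by (simp add: abs_le_iff)
qed

lemma det3_bound: "vb x X \<Longrightarrow> vb y X \<Longrightarrow> vb z X \<Longrightarrow> \<bar>det3 x y z\<bar> \<le> 6*X^3"
proof -
  assume a: "vb x X" "vb y X" "vb z X"
  have "\<bar>det3 x y z\<bar> \<le> 3*(2*X*X)*X" unfolding det3_def by (rule dt_bound[OF vb_cr[OF a(1,2)] a(3)])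
  then show ?thesis by (simp add: power3_eq_cube)
qed

lemma sp_bound: "vb a X \<Longrightarrow> vb b Y \<Longrightarrow> \<bar>sp a b $ i $ j\<bar> \<le> X*Y"
proof -
  assume v: "vb a X" "vb b Y"
  have "\<bar>a$i*b$j\<bar> \<le> X*Y" "\<bar>b$i*a$j\<bar> \<le> Y*X" using v by (auto simp: vb_def intro!: abs2)
  moreover have "Y*X = X*Y" by simp
  ultimately have "\<bar>a$i*b$j + b$i*a$j\<bar> \<le> 2*(X*Y)" using abs_triangle_ineq[of "a$i*b$j" "b$i*a$j"] by linarith
  then show ?thesis unfolding sp_def by simp
qed

lemma det3_cyc: "det3 x y z = det3 y z x"
  by (simp add: det3_def dt_def cr_def algebra_simps)

lemma qf_spc: "qf (sp (cr a b) (cr c d)) x = det3 a b x * det3 c d x"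
  by (simp add: qf_sp dt_cr)

lemma intv_sp_diag: "intv a \<Longrightarrow> intv b \<Longrightarrow> sp a b $ i $ i \<in> \<int>"
  by (simp add: sp_def intv_def)
lemma intv_sp_off: "intv a \<Longrightarrow> intv b \<Longrightarrow> 2 * sp a b $ i $ j \<in> \<int>"
proof -
  assume "intv a" "intv b"
  moreover have "2 * sp a b $ i $ j = a$i*b$j + b$i*a$j" by (simp add: sp_def)
  ultimately show ?thesis by (simp add: intv_def)
qed

lemma step2:
  fixes Q :: "real^3^3" and z1 z2 z3 z4 z5 :: "real^3"
  assumes symQ: "symmetric_form Q" and dQ: "det Q = -1"
    and qm: "\<forall>i j. \<bar>Q$i$j\<bar> \<le> qm" and qm0: "0 \<le> qm"
    and Zb: "1 \<le> Zb"
    and iz: "intv z1" "intv z2" "intv z3" "intv z4" "intv z5"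
    and bz: "vb z1 Zb" "vb z2 Zb" "vb z3 Zb" "vb z4 Zb" "vb z5 Zb"
    and eq: "\<bar>qf Q z1\<bar> \<le> \<epsilon>" "\<bar>qf Q z2\<bar> \<le> \<epsilon>" "\<bar>qf Q z3\<bar> \<le> \<epsilon>" "\<bar>qf Q z4\<bar> \<le> \<epsilon>" "\<bar>qf Q z5\<bar> \<le> \<epsilon>"
    and nz: "det3 z1 z2 z3 \<noteq> 0" "det3 z1 z2 z4 \<noteq> 0" "det3 z1 z2 z5 \<noteq> 0" "det3 z1 z3 z4 \<noteq> 0"
      "det3 z1 z3 z5 \<noteq> 0" "det3 z1 z4 z5 \<noteq> 0" "det3 z2 z3 z4 \<noteq> 0" "det3 z2 z3 z5 \<noteq> 0"
      "det3 z2 z4 z5 \<noteq> 0" "det3 z3 z4 z5 \<noteq> 0"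
    and sm1: "20*Zb^4*\<epsilon> \<le> 1" and sm2: "18*(qm+1)*(qm+1)*(20*Zb^4*\<epsilon>) \<le> 1/2"
  shows "\<exists>Q2. integral_form Q2 \<and> Q2 \<noteq> 0 \<and> qdet Q2 \<noteq> 0 \<and> qnorm Q2 \<le> 576*Zb^10 \<and>
     qnorm (Q - root 3 (inverse (qdet Q2)) *\<^sub>R Q2) \<le> 74*(qm+1)^3*(20*Zb^4*\<epsilon>)"
proof -
  define c12 where "c12 = cr z1 z2"
  define c34 where "c34 = cr z3 z4"
  define c35 where "c35 = cr z3 z5"
  define c45 where "c45 = cr z4 z5"
  define c13 where "c13 = cr z1 z3"
  define c24 where "c24 = cr z2 z4"
  define c23 where "c23 = cr z2 z3"
  define P1 where "P1 = sp c23 c45"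
  define P2 where "P2 = sp c13 c45"
  define P3 where "P3 = sp c12 c45"
  define P4 where "P4 = sp c12 c35"
  define P5 where "P5 = sp c12 c34"
  note cdefs = c12_def c34_def c35_def c45_def c13_def c24_def c23_def
  have qP1: "qf P1 x = det3 z2 z3 x * det3 z4 z5 x" for x unfolding P1_def cdefs qf_spc ..
  have qP2: "qf P2 x = det3 z1 z3 x * det3 z4 z5 x" for x unfolding P2_def cdefs qf_spc ..
  have qP3: "qf P3 x = det3 z1 z2 x * det3 z4 z5 x" for x unfolding P3_def cdefs qf_spc ..
  have qP4: "qf P4 x = det3 z1 z2 x * det3 z3 z5 x" for x unfolding P4_def cdefs qf_spc ..
  have qP5: "qf P5 x = det3 z1 z2 x * det3 z3 z4 x" for x unfolding P5_def cdefs qf_spc ..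
  have n1: "det3 z2 z3 z1 \<noteq> 0" "det3 z4 z5 z1 \<noteq> 0"
    using nz(1,6) det3_cyc[of z1 z2 z3] det3_cyc[of z1 z4 z5] by auto
  have n2: "det3 z1 z3 z2 \<noteq> 0" "det3 z4 z5 z2 \<noteq> 0"
    using nz(1,9) det3_swap23[of z1 z2 z3] det3_cyc[of z2 z4 z5] by auto
  have n3: "det3 z4 z5 z3 \<noteq> 0" using nz(10) det3_cyc[of z3 z4 z5] by auto
  have n4: "det3 z3 z5 z4 \<noteq> 0" using nz(10) det3_swap23[of z3 z4 z5] by auto
  have n6: "det3 z2 z4 z1 \<noteq> 0" using nz(2) det3_cyc[of z1 z2 z4] by auto
  define d1 where "d1 = qf P1 z1"
  define d2 where "d2 = qf P2 z2"
  define d3 where "d3 = qf P3 z3"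
  define d4 where "d4 = qf P4 z4"
  define d5 where "d5 = qf P5 z5"
  have dnz: "d1 \<noteq> 0" "d2 \<noteq> 0" "d3 \<noteq> 0" "d4 \<noteq> 0" "d5 \<noteq> 0"
    unfolding d1_def d2_def d3_def d4_def d5_def qP1 qP2 qP3 qP4 qP5
    using n1 n2 n3 n4 nz by auto
  have dint: "d1 \<in> \<int>" "d2 \<in> \<int>" "d3 \<in> \<int>" "d4 \<in> \<int>" "d5 \<in> \<int>"
    unfolding d1_def d2_def d3_def d4_def d5_def qP1 qP2 qP3 qP4 qP5
    using iz by (auto intro!: Ints_mult int_det3)
  define W where "W = (qf Q z1 / d1) *\<^sub>R P1 + (qf Q z2 / d2) *\<^sub>R P2 + (qf Q z3 / d3) *\<^sub>R P3
     + (qf Q z4 / d4) *\<^sub>R P4 + (qf Q z5 / d5) *\<^sub>R P5"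
  have qW: "qf W x = (qf Q z1 / d1) * qf P1 x + (qf Q z2 / d2) * qf P2 x + (qf Q z3 / d3) * qf P3 x
     + (qf Q z4 / d4) * qf P4 x + (qf Q z5 / d5) * qf P5 x" for x
    unfolding W_def qf_plus qf_smult ..
  have qWz: "qf W z1 = qf Q z1" "qf W z2 = qf Q z2" "qf W z3 = qf Q z3" "qf W z4 = qf Q z4" "qf W z5 = qf Q z5"
    unfolding qW using dnz
    by (simp_all add: d1_def d2_def d3_def d4_def d5_def qP1 qP2 qP3 qP4 qP5 det3_rep)
  have symW: "symmetric_form W" unfolding W_def P1_def P2_def P3_def P4_def P5_def
    by (intro sym_plus sym_smult sym_sp)
  define H where "H = Q - W"
  have symH: "symmetric_form H" unfolding H_def by (rule sym_minus[OF symQ symW])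
  have qH: "qf H z1 = 0" "qf H z2 = 0" "qf H z3 = 0" "qf H z4 = 0" "qf H z5 = 0"
    unfolding H_def qf_minus qWz by simp_all
  define \<alpha> where "\<alpha> = det3 z1 z3 z5 * det3 z2 z4 z5"
  define \<beta> where "\<beta> = det3 z1 z2 z5 * det3 z3 z4 z5"
  define Q2 where "Q2 = \<alpha> *\<^sub>R sp c12 c34 - \<beta> *\<^sub>R sp c13 c24"
  have symQ2: "symmetric_form Q2" unfolding Q2_def by (intro sym_minus sym_smult sym_sp)
  have qQ2: "qf Q2 x = \<alpha> * (det3 z1 z2 x * det3 z3 z4 x) - \<beta> * (det3 z1 z3 x * det3 z2 z4 x)" for x
    unfolding Q2_def qf_minus qf_smult cdefs qf_spc ..
  have qQ2z: "qf Q2 z1 = 0" "qf Q2 z2 = 0" "qf Q2 z3 = 0" "qf Q2 z4 = 0" "qf Q2 z5 = 0"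
    unfolding qQ2 by (simp_all add: det3_rep \<alpha>_def \<beta>_def)
  define w0 where "w0 = z1 + z2"
  have qQ2w: "qf Q2 w0 = - \<beta> * (det3 z1 z3 z2 * det3 z2 z4 z1)"
    unfolding qQ2 w0_def det3_add3 by (simp add: det3_rep)
  have bnz: "\<beta> \<noteq> 0" unfolding \<beta>_def using nz by simp
  have qQ2wnz: "qf Q2 w0 \<noteq> 0" unfolding qQ2w using bnz n2 n6 by simp
  define \<kappa> where "\<kappa> = qf H w0 / qf Q2 w0"
  have HQ2: "H = \<kappa> *\<^sub>R Q2"
  proof -
    have "H - \<kappa> *\<^sub>R Q2 = 0"
    proof (rule uniq[of _ z1 z2 z3 z4 z5])
      show "symmetric_form (H - \<kappa> *\<^sub>R Q2)" by (intro sym_minus sym_smult symH symQ2)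
      show "qf (H - \<kappa> *\<^sub>R Q2) (z1 + z2) = 0"
        unfolding qf_minus qf_smult \<kappa>_def w0_def[symmetric] using qQ2wnz by simp
    qed (use qH qQ2z nz(1,2,3) n3 in \<open>simp_all add: qf_minus qf_smult\<close>)
    then show ?thesis by simp
  qed
  have QHW: "Q = \<kappa> *\<^sub>R Q2 + W" using HQ2 unfolding H_def by (simp add: algebra_simps)
  define Z2 where "Z2 = 2*Zb*Zb"
  have vc: "vb c12 Z2" "vb c34 Z2" "vb c35 Z2" "vb c45 Z2" "vb c13 Z2" "vb c24 Z2" "vb c23 Z2"
    unfolding cdefs Z2_def using bz by (auto intro!: vb_cr)
  have Z2sq: "Z2*Z2 = 4*Zb^4" unfolding Z2_def by (simp add: power4_eq_xxxx)
  have spb: "\<bar>sp a b $ i $ j\<bar> \<le> 4*Zb^4" if "vb a Z2" "vb b Z2" for a b i j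
    using sp_bound[OF that, of i j] Z2sq by simp
  have d3b: "\<bar>det3 a b c\<bar> \<le> 6*Zb^3" if "a \<in> {z1,z2,z3,z4,z5}" "b \<in> {z1,z2,z3,z4,z5}" "c \<in> {z1,z2,z3,z4,z5}" for a b c
    using that bz by (intro det3_bound) auto
  have ab: "\<bar>\<alpha>\<bar> \<le> 36*Zb^6" "\<bar>\<beta>\<bar> \<le> 36*Zb^6"
  proof -
    have "\<bar>\<alpha>\<bar> \<le> (6*Zb^3)*(6*Zb^3)" unfolding \<alpha>_def by (rule abs2) (auto intro!: d3b)
    then show "\<bar>\<alpha>\<bar> \<le> 36*Zb^6" by (simp add: power_add[symmetric] mult.assoc mult.left_commute)
    have "\<bar>\<beta>\<bar> \<le> (6*Zb^3)*(6*Zb^3)" unfolding \<beta>_def by (rule abs2) (auto intro!: d3b)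
    then show "\<bar>\<beta>\<bar> \<le> 36*Zb^6" by (simp add: power_add[symmetric] mult.assoc mult.left_commute)
  qed
  have Q2b: "\<forall>i j. \<bar>Q2$i$j\<bar> \<le> 288*Zb^10"
  proof (intro allI)
    fix i j
    have "\<bar>\<alpha> * sp c12 c34 $ i $ j\<bar> \<le> (36*Zb^6)*(4*Zb^4)" by (rule abs2[OF ab(1) spb[OF vc(1,2)]])
    moreover have "\<bar>\<beta> * sp c13 c24 $ i $ j\<bar> \<le> (36*Zb^6)*(4*Zb^4)" by (rule abs2[OF ab(2) spb[OF vc(5,6)]])
    moreover have "(36*Zb^6)*(4*Zb^4) = 144*Zb^10" by (simp add: power_add[symmetric] mult.assoc mult.left_commute)
    ultimately show "\<bar>Q2$i$j\<bar> \<le> 288*Zb^10" unfolding Q2_def by (simp; linarith?)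
  qed
  have nQ2: "qnorm Q2 \<le> 576*Zb^10" using qnorm_le[OF Q2b] Zb by simp
  have icv: "intv c12" "intv c34" "intv c13" "intv c24" unfolding cdefs using iz by (auto intro!: intv_cr)
  have abint: "\<alpha> \<in> \<int>" "\<beta> \<in> \<int>" unfolding \<alpha>_def \<beta>_def using iz by (auto intro!: Ints_mult int_det3)
  have intQ2: "integral_form Q2"
    unfolding integral_form_def
  proof (intro conjI symQ2 subsetI)
    fix y assume "y \<in> qcoeffs Q2"
    then obtain i j where "y = Q2$i$i \<or> y = 2*Q2$i$j" unfolding qcoeffs_def by auto
    moreover have "Q2$i$i = \<alpha> * sp c12 c34 $ i $ i - \<beta> * sp c13 c24 $ i $ i" unfolding Q2_def by simp
    moreover have "2*Q2$i$j = \<alpha> * (2* sp c12 c34 $ i $ j) - \<beta> * (2 * sp c13 c24 $ i $ j)"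
      unfolding Q2_def by (simp add: algebra_simps)
    ultimately show "y \<in> \<int>"
      using abint intv_sp_diag[OF icv(1,2)] intv_sp_diag[OF icv(3,4)]
        intv_sp_off[OF icv(1,2)] intv_sp_off[OF icv(3,4)]
      by (metis Ints_diff Ints_mult)
  qed
  define w where "w = 20*Zb^4*\<epsilon>"
  have e0: "0 \<le> \<epsilon>" using eq(1) by linarith
  have Gb: "\<bar>(qf Q z / d) * P $ i $ j\<bar> \<le> \<epsilon> * (4*Zb^4)"
    if "\<bar>qf Q z\<bar> \<le> \<epsilon>" "d \<in> \<int>" "d \<noteq> 0" "\<bar>P $ i $ j\<bar> \<le> 4*Zb^4" for z d P i j
  proof -
    have "\<bar>qf Q z / d\<bar> \<le> \<epsilon>"
    proof -
      have "1 \<le> \<bar>d\<bar>" by (rule int_abs_ge1[OF that(2,3)])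
      then have "\<bar>qf Q z\<bar> / \<bar>d\<bar> \<le> \<bar>qf Q z\<bar> / 1" by (intro divide_left_mono) auto
      then have "\<bar>qf Q z / d\<bar> \<le> \<bar>qf Q z\<bar>" by (simp add: abs_divide)
      then show ?thesis using that(1) by linarith
    qed
    then show ?thesis by (rule abs2[OF _ that(4)])
  qed
  have Wb: "\<forall>i j. \<bar>W$i$j\<bar> \<le> w"
  proof (intro allI)
    fix i j
    have "\<bar>(qf Q z1 / d1) * P1 $ i $ j\<bar> \<le> \<epsilon> * (4*Zb^4)"
      by (rule Gb[OF eq(1) dint(1) dnz(1)]) (unfold P1_def, rule spb[OF vc(7,4)])
    moreover have "\<bar>(qf Q z2 / d2) * P2 $ i $ j\<bar> \<le> \<epsilon> * (4*Zb^4)"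
      by (rule Gb[OF eq(2) dint(2) dnz(2)]) (unfold P2_def, rule spb[OF vc(5,4)])
    moreover have "\<bar>(qf Q z3 / d3) * P3 $ i $ j\<bar> \<le> \<epsilon> * (4*Zb^4)"
      by (rule Gb[OF eq(3) dint(3) dnz(3)]) (unfold P3_def, rule spb[OF vc(1,4)])
    moreover have "\<bar>(qf Q z4 / d4) * P4 $ i $ j\<bar> \<le> \<epsilon> * (4*Zb^4)"
      by (rule Gb[OF eq(4) dint(4) dnz(4)]) (unfold P4_def, rule spb[OF vc(1,3)])
    moreover have "\<bar>(qf Q z5 / d5) * P5 $ i $ j\<bar> \<le> \<epsilon> * (4*Zb^4)"
      by (rule Gb[OF eq(5) dint(5) dnz(5)]) (unfold P5_def, rule spb[OF vc(1,2)])
    moreover have "W$i$j = (qf Q z1 / d1) * P1 $ i $ j + (qf Q z2 / d2) * P2 $ i $ j + (qf Q z3 / d3) * P3 $ i $ j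
      + (qf Q z4 / d4) * P4 $ i $ j + (qf Q z5 / d5) * P5 $ i $ j" by (simp add: W_def)
    ultimately have "\<bar>W$i$j\<bar> \<le> 5*(\<epsilon> * (4*Zb^4))" by (simp only: abs_le_iff) linarith
    then show "\<bar>W$i$j\<bar> \<le> w" unfolding w_def by (simp add: algebra_simps)
  qed
  have w1: "w \<le> 1" using sm1 unfolding w_def .
  have Hb: "\<forall>i j. \<bar>H$i$j\<bar> \<le> qm + 1"
  proof (intro allI)
    fix i j show "\<bar>H$i$j\<bar> \<le> qm + 1" unfolding H_def using qm Wb w1 by (simp add: abs_le_iff; (smt (verit))?)
  qed
  have Qb: "\<forall>i j. \<bar>Q$i$j\<bar> \<le> qm + 1"
  proof (intro allI)
    fix i j show "\<bar>Q$i$j\<bar> \<le> qm + 1" using qm[rule_format, of i j] by linarith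
  qed
  have QHd: "\<forall>i j. \<bar>Q$i$j - H$i$j\<bar> \<le> w" using Wb unfolding H_def by simp
  define \<theta> where "\<theta> = 18*(qm+1)*(qm+1)*w"
  have w0': "0 \<le> w" unfolding w_def using e0 Zb by simp
  have th0: "0 \<le> \<theta>" unfolding \<theta>_def using w0' qm0 by simp
  have dd: "\<bar>det Q - det H\<bar> \<le> \<theta>" unfolding \<theta>_def by (rule det_diff[OF Qb Hb QHd])
  have th: "\<theta> \<le> 1/2" using sm2 unfolding \<theta>_def w_def .
  define D where "D = qdet H"
  have D1: "\<bar>D - 1\<bar> \<le> \<theta>" using dd dQ unfolding D_def qdet_def by simp
  have Dpos: "1/2 \<le> D" using D1 th by linarith
  have DK: "D = \<kappa>^3 * qdet Q2" unfolding D_def qdet_def HQ2 det_smult by simp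
  have knz: "\<kappa> \<noteq> 0" and q2nz: "qdet Q2 \<noteq> 0" using DK Dpos by auto
  have Q2nz: "Q2 \<noteq> 0" using q2nz unfolding qdet_def by (auto simp: det_3)
  define \<rho> where "\<rho> = root 3 (inverse (qdet Q2))"
  have rho3: "\<rho>^3 = inverse (qdet Q2)" unfolding \<rho>_def by (rule odd_real_root_pow) simp
  define r where "r = \<rho> / \<kappa>"
  have r3: "r^3 = 1 / D" unfolding r_def DK using rho3 knz q2nz
    by (simp add: power_divide field_simps)
  have rpos: "0 < r"
  proof (rule ccontr)
    assume "\<not> 0 < r"
    then have "r*r*r \<le> 0" using mult_nonneg_nonpos[of "r*r" r] by simp
    then have "r^3 \<le> 0" by (simp add: power3_eq_cube)
    then show False using r3 Dpos by simp
  qed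
  have r1: "\<bar>1 - r\<bar> \<le> 2*\<theta>"
  proof -
    have "\<bar>1 - r^3\<bar> = \<bar>D - 1\<bar> / D" unfolding r3 using Dpos by (simp add: field_simps abs_divide)
    also have "\<dots> \<le> 2*\<theta>"
    proof -
      have "\<theta>*1 \<le> \<theta>*(2*D)" by (rule mult_left_mono) (use Dpos th0 in auto)
      then have "\<bar>D - 1\<bar> \<le> (2*\<theta>)*D" using D1 by (simp add: algebra_simps)
      then show ?thesis using Dpos by (simp add: divide_le_eq)
    qed
    finally have a: "\<bar>1 - r^3\<bar> \<le> 2*\<theta>" .
    have "1 - r^3 = (1 - r) * (1 + r + r^2)" by (simp add: algebra_simps power2_eq_square power3_eq_cube)
    then have "\<bar>1 - r^3\<bar> = \<bar>1 - r\<bar> * (1 + r + r^2)" using rpos by (simp add: abs_mult)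
    moreover have "\<bar>1 - r\<bar> \<le> \<bar>1 - r\<bar> * (1 + r + r^2)" using rpos
      by (simp add: mult_le_cancel_left1; (smt (verit) zero_le_power2)?)
    ultimately show ?thesis using a by linarith
  qed
  have diffeq: "Q - \<rho> *\<^sub>R Q2 = W + (1 - r) *\<^sub>R H"
  proof -
    have "\<rho> *\<^sub>R Q2 = r *\<^sub>R H" unfolding HQ2 r_def using knz by simp
    then show ?thesis unfolding H_def by (simp add: algebra_simps)
  qed
  have fin: "\<forall>i j. \<bar>(Q - \<rho> *\<^sub>R Q2)$i$j\<bar> \<le> w + 2*\<theta>*(qm+1)"
  proof (intro allI)
    fix i j
    have "\<bar>(1 - r) * H$i$j\<bar> \<le> (2*\<theta>)*(qm+1)" by (rule abs2[OF r1]) (use Hb in auto)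
    then show "\<bar>(Q - \<rho> *\<^sub>R Q2)$i$j\<bar> \<le> w + 2*\<theta>*(qm+1)" unfolding diffeq using Wb
      by (simp add: abs_le_iff; (smt (verit))?)
  qed
  have "qnorm (Q - \<rho> *\<^sub>R Q2) \<le> 2*(w + 2*\<theta>*(qm+1))"
    by (rule qnorm_le[OF fin]) (use w0' th0 qm0 in simp)
  also have "\<dots> = 2*w + 72*(qm+1)^3*w" unfolding \<theta>_def by (simp add: power3_eq_cube algebra_simps)
  also have "\<dots> \<le> 74*(qm+1)^3*w"
  proof -
    have "1 \<le> (qm+1)^3" using qm0 by simp
    then have "2*w \<le> 2*(qm+1)^3*w" using w0' by (simp add: mult_right_mono)
    then show ?thesis by (simp add: mult.commute)
  qed
  finally have "qnorm (Q - \<rho> *\<^sub>R Q2) \<le> 74*(qm+1)^3*(20*Zb^4*\<epsilon>)" unfolding w_def .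
  then show ?thesis using intQ2 Q2nz q2nz nQ2 unfolding \<rho>_def by blast
qed

lemma smallness:
  fixes K qm R M c \<eta> Zb \<epsilon> :: real
  assumes K1: "1 \<le> K" and qm0: "0 \<le> qm" and R: "10 < R" and M: "1 < M" and c0: "0 < c"
    and e0: "0 < \<eta>" and e1: "\<eta> \<le> 1/(2592*(36*qm+1)^2*K^16)"
    and e3: "\<eta> \<le> c*((576 * K^10) powr (-M))/(1480*(qm+1)^3*K^4)"
    and Zb: "Zb = K * R^2" and ep: "\<epsilon> = \<eta> * R powr (- 50 * M)"
  shows "6 * (216*Zb^8*\<epsilon>) * (36*qm*Zb^4 + 216*Zb^8*\<epsilon>) * (36*qm*Zb^4 + 216*Zb^8*\<epsilon>) < 1"
    and "20*Zb^4*\<epsilon> \<le> 1" and "18*(qm+1)*(qm+1)*(20*Zb^4*\<epsilon>) \<le> 1/2"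
    and "74*(qm+1)^3*(20*Zb^4*\<epsilon>) \<le> c * (576*Zb^10) powr (-M)"
    and "1 \<le> Zb"
proof -
  have R0: "0 < R" using R by simp
  have R1: "1 \<le> R" using R by simp
  have epos: "0 \<le> \<epsilon>" unfolding ep using e0 by simp
  have Zb1: "1 \<le> Zb" unfolding Zb using K1 R1
    by (metis mult_mono one_le_power mult_1_right order_trans zero_le_one le_numeral_extra(1))
  show "1 \<le> Zb" by (rule Zb1)
  define u where "u = Zb^16 * \<epsilon>"
  have Rp: "R^n * R powr (- 50 * M) = R powr (real n - 50 * M)" for n :: nat
  proof -
    have "R powr (real n - 50 * M) = R powr (real n + (- 50 * M))" by simp
    also have "\<dots> = R powr real n * R powr (- 50 * M)" by (rule powr_add)
    also have "R powr real n = R^n" using R0 by (rule powr_realpow)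
    finally show ?thesis by simp
  qed
  have u1: "u \<le> K^16 * \<eta>"
  proof -
    have "u = K^16 * \<eta> * (R^32 * R powr (- 50 * M))"
      unfolding u_def Zb ep by (simp add: power_mult_distrib power_mult[symmetric] algebra_simps)
    also have "R^32 * R powr (- 50 * M) \<le> 1"
    proof -
      have "R powr (real 32 - 50 * M) \<le> R powr 0" by (rule powr_mono) (use M R1 in auto)
      then show ?thesis unfolding Rp using R0 by simp
    qed
    then have "K^16 * \<eta> * (R^32 * R powr (- 50 * M)) \<le> K^16 * \<eta> * 1"
      by (intro mult_left_mono) (use e0 K1 in auto)
    finally show ?thesis by simp
  qed
  have K16: "0 < K^16" using K1 by simp
  have A0: "0 < 2592*(36*qm+1)^2" using qm0 by simp
  have u2: "u * (2592*(36*qm+1)^2) \<le> 1"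
  proof -
    have "K^16 * \<eta> \<le> K^16 * (1/(2592*(36*qm+1)^2*K^16))" by (rule mult_left_mono[OF e1]) (use K16 in simp)
    also have "\<dots> = 1/(2592*(36*qm+1)^2)" using K16 by simp
    finally have "u \<le> 1/(2592*(36*qm+1)^2)" using u1 by linarith
    then show ?thesis using A0 by (simp add: le_divide_eq)
  qed
  have u0: "0 \<le> u" unfolding u_def using epos Zb1 by simp
  have q1: "1 \<le> (36*qm+1)^2" using qm0 by simp
  have u3: "u \<le> 1/2592"
  proof -
    have "u * 2592 \<le> u * (2592*(36*qm+1)^2)" using q1 u0 by (simp add: mult_left_mono)
    then show ?thesis using u2 by simp
  qed
  have z4: "Zb^4 * \<epsilon> \<le> u" unfolding u_def
    by (rule mult_right_mono[OF power_increasing[OF _ Zb1] epos]) simp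
  have z8: "Zb^8 * \<epsilon> \<le> u" unfolding u_def
    by (rule mult_right_mono[OF power_increasing[OF _ Zb1] epos]) simp
  define \<delta> where "\<delta> = 216*Zb^8*\<epsilon>"
  have d1: "\<delta> \<le> 1" unfolding \<delta>_def using z8 u3 by simp
  have d0: "0 \<le> \<delta>" unfolding \<delta>_def using epos Zb1 by simp
  have Z4: "1 \<le> Zb^4" using Zb1 by simp
  have X: "36*qm*Zb^4 + \<delta> \<le> (36*qm+1)*Zb^4" using d1 Z4 by (simp add: algebra_simps)
  have X0: "0 \<le> 36*qm*Zb^4 + \<delta>" using qm0 d0 Zb1 by simp
  have "6 * \<delta> * (36*qm*Zb^4 + \<delta>) * (36*qm*Zb^4 + \<delta>) \<le> 6 * \<delta> * ((36*qm+1)*Zb^4) * ((36*qm+1)*Zb^4)"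
    using X X0 d0 by (simp add: mult_mono mult_left_mono)
  also have "\<dots> = 1296 * (36*qm+1)^2 * (Zb^8 * \<epsilon> * Zb^8)" unfolding \<delta>_def
    by (simp add: power2_eq_square algebra_simps power_add[symmetric])
  also have "Zb^8 * \<epsilon> * Zb^8 = u" unfolding u_def by (simp add: power_add[symmetric] algebra_simps)
  also have "1296 * (36*qm+1)^2 * u \<le> 1/2"
  proof -
    have "u * (2592 * (36*qm+1)^2) = 2 * (1296 * (36*qm+1)^2 * u)" by (simp add: algebra_simps)
    then show ?thesis using u2 by linarith
  qed
  finally show "6 * (216*Zb^8*\<epsilon>) * (36*qm*Zb^4 + 216*Zb^8*\<epsilon>) * (36*qm*Zb^4 + 216*Zb^8*\<epsilon>) < 1"
    unfolding \<delta>_def by simp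
  show "20*Zb^4*\<epsilon> \<le> 1" using z4 u3 by simp
  have q2: "(qm+1)*(qm+1) \<le> (36*qm+1)^2" using qm0 by (simp add: power2_eq_square mult_mono)
  have "18*(qm+1)*(qm+1)*(20*Zb^4*\<epsilon>) \<le> 360*(36*qm+1)^2*u"
  proof -
    have "(qm+1)*(qm+1)*(Zb^4*\<epsilon>) \<le> (36*qm+1)^2*u"
      by (rule mult_mono[OF q2 z4]) (use qm0 epos Zb1 in auto)
    then show ?thesis by (simp add: algebra_simps)
  qed
  also have "\<dots> \<le> 1/2"
  proof -
    have "u * (2592 * (36*qm+1)^2) = 2592 * ((36*qm+1)^2 * u)" by (simp add: algebra_simps)
    moreover have "0 \<le> (36*qm+1)^2 * u" using u0 by simp
    ultimately show ?thesis using u2 by linarith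
  qed
  finally show "18*(qm+1)*(qm+1)*(20*Zb^4*\<epsilon>) \<le> 1/2" .
  define CK where "CK = (576 * K^10) powr (-M)"
  have CK0: "0 < CK" unfolding CK_def using K1 by simp
  have B0: "0 < 1480*(qm+1)^3*K^4" using qm0 K1 by simp
  have e3': "1480*(qm+1)^3*K^4 * \<eta> \<le> c * CK" using e3 B0 unfolding CK_def by (simp add: le_divide_eq mult.commute)
  have lhs: "Zb^4 * \<epsilon> \<le> K^4 * \<eta> * R powr (- 20 * M)"
  proof -
    have "Zb^4 * \<epsilon> = K^4 * \<eta> * (R^8 * R powr (- 50 * M))"
      unfolding Zb ep by (simp add: power_mult_distrib power_mult[symmetric] algebra_simps)
    also have "R^8 * R powr (- 50 * M) \<le> R powr (- 20 * M)"
      unfolding Rp by (rule powr_mono) (use M R1 in auto)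
    then have "K^4 * \<eta> * (R^8 * R powr (- 50 * M)) \<le> K^4 * \<eta> * R powr (- 20 * M)"
      by (intro mult_left_mono) (use e0 K1 in auto)
    finally show ?thesis .
  qed
  have rhs: "(576*Zb^10) powr (-M) = CK * R powr (- 20 * M)"
  proof -
    have "576*Zb^10 = (576 * K^10) * R^20" unfolding Zb by (simp add: power_mult_distrib power_mult[symmetric])
    then have "(576*Zb^10) powr (-M) = CK * (R^20) powr (-M)" unfolding CK_def
      by (simp add: powr_mult)
    also have "(R^20) powr (-M) = R powr (- 20 * M)"
    proof -
      have "R^20 = R powr 20" using powr_realpow[OF R0, of 20] by simp
      then have "(R^20) powr (-M) = R powr (20 * -M)" by (simp only: powr_powr)
      then show ?thesis by simp
    qed
    finally show ?thesis .
  qed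
  have Rpos: "0 < R powr (- 20 * M)" using R0 by simp
  have "74*(qm+1)^3*(20*Zb^4*\<epsilon>) = 1480*(qm+1)^3*(Zb^4*\<epsilon>)" by simp
  also have "\<dots> \<le> 1480*(qm+1)^3*(K^4 * \<eta> * R powr (- 20 * M))"
    by (rule mult_left_mono[OF lhs]) (use qm0 in simp)
  also have "\<dots> = (1480*(qm+1)^3*K^4 * \<eta>) * R powr (- 20 * M)" by (simp add: algebra_simps)
  also have "\<dots> \<le> (c * CK) * R powr (- 20 * M)" by (rule mult_right_mono[OF e3']) (use Rpos in simp)
  also have "\<dots> = c * (576*Zb^10) powr (-M)" unfolding rhs by simp
  finally show "74*(qm+1)^3*(20*Zb^4*\<epsilon>) \<le> c * (576*Zb^10) powr (-M)" .
qed

definition nl :: "real^3 \<Rightarrow> real^3 \<Rightarrow> bool" where "nl v w \<longleftrightarrow> (\<forall>t. v \<noteq> t *\<^sub>R w)"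

lemma supn_ge: "\<bar>v$i\<bar> \<le> supn v"
  unfolding supn_def by (rule Max_ge) auto

lemma supn_zero: "supn 0 = 0"
  unfolding supn_def by simp

lemma sum9_ge: "\<bar>(A::real^3^3)$i$j\<bar> \<le> (\<Sum>i\<in>UNIV. \<Sum>j\<in>UNIV. \<bar>A$i$j\<bar>)"
proof -
  have "\<bar>A$i$j\<bar> \<le> (\<Sum>j\<in>UNIV. \<bar>A$i$j\<bar>)" by (rule member_le_sum) auto
  also have "\<dots> \<le> (\<Sum>i\<in>UNIV. \<Sum>j\<in>UNIV. \<bar>A$i$j\<bar>)"
    by (rule member_le_sum[where f = "\<lambda>i. \<Sum>j\<in>UNIV. \<bar>A$i$j\<bar>"]) (auto intro: sum_nonneg)
  finally show ?thesis .
qed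

lemma mv_bound: "\<bar>(A *v v)$i\<bar> \<le> (\<Sum>i\<in>UNIV. \<Sum>j\<in>UNIV. \<bar>A$i$j\<bar>) * supn v"
proof -
  have "\<bar>(A *v v)$i\<bar> = \<bar>\<Sum>j\<in>UNIV. A$i$j * v$j\<bar>" by (simp add: matrix_vector_mult_def)
  also have "\<dots> \<le> (\<Sum>j\<in>UNIV. \<bar>A$i$j * v$j\<bar>)" by (rule sum_abs)
  also have "\<dots> \<le> (\<Sum>j\<in>UNIV. \<bar>A$i$j\<bar> * supn v)"
    by (rule sum_mono) (simp add: abs_mult mult_left_mono supn_ge)
  also have "\<dots> = (\<Sum>j\<in>UNIV. \<bar>A$i$j\<bar>) * supn v" by (simp add: sum_distrib_right)
  also have "\<dots> \<le> (\<Sum>i\<in>UNIV. \<Sum>j\<in>UNIV. \<bar>A$i$j\<bar>) * supn v"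
  proof (rule mult_right_mono)
    show "(\<Sum>j\<in>UNIV. \<bar>A$i$j\<bar>) \<le> (\<Sum>i\<in>UNIV. \<Sum>j\<in>UNIV. \<bar>A$i$j\<bar>)"
      by (rule member_le_sum[where f = "\<lambda>i. \<Sum>j\<in>UNIV. \<bar>A$i$j\<bar>"]) (auto intro: sum_nonneg)
    show "0 \<le> supn v" using supn_ge[of v 1] by linarith
  qed
  finally show ?thesis .
qed

lemma five_card:
  assumes "finite D" "5 \<le> card D"
  obtains a b c d e where "a \<in> D" "b \<in> D" "c \<in> D" "d \<in> D" "e \<in> D"
    "distinct [a,b,c,d,e]"
proof -
  obtain T where T: "T \<subseteq> D" "card T = 5" "finite T" using obtain_subset_with_card_n[OF assms(2)] by blast
  have "\<exists>a b c d e. T = {a,b,c,d,e} \<and> distinct [a,b,c,d,e]"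
    using T(2) by (simp add: card_Suc_eq numeral_eq_Suc; blast?)
  then obtain a b c d e where "T = {a,b,c,d,e}" "distinct [a,b,c,d,e]" by blast
  then show ?thesis using that T(1) by auto
qed

theorem lemma2p6:
  fixes M :: real and Q g :: "real^3^3"
  assumes "M > 1"
    and "symmetric_form Q"
    and "indefinite Q"
    and "qdet Q = 1"
    and "diophantine_type Q M"
    and "det g = 1"
    and "\<forall>v. qf Q v = Q0 (g *v v)"
  shows "\<exists>\<eta>. 0 < \<eta> \<and> \<eta> < 1 \<and>
    (\<forall>R>10. \<exists>D. finite D \<and> card D \<le> 12 \<and> (\<forall>d\<in>D. d \<noteq> 0) \<and>
       {v \<in> lattice_of g \<inter> H_set \<eta> M. R \<le> supn v \<and> supn v < R^2}
         \<subseteq> (\<Union>d\<in>D. line_through_origin d))"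
proof -
  note M = assms(1) and symQ = assms(2) and qQ = assms(7)
  obtain c where c0: "c > 0" and dioph: "\<And>Q'. integral_form Q' \<Longrightarrow> Q' \<noteq> 0 \<Longrightarrow> qdet Q' \<noteq> 0 \<Longrightarrow>
      qnorm (Q - root 3 (inverse (qdet Q')) *\<^sub>R Q') > c * qnorm Q' powr (- M)"
    using assms(5) unfolding diophantine_type_def by blast
  have dQ: "det Q = -1" using assms(4) unfolding qdet_def by simp
  obtain gi where gi: "gi ** g = mat 1"
    using assms(6) invertible_det_nz[of g] unfolding invertible_def by auto
  define K where "K = 1 + (\<Sum>i\<in>UNIV. \<Sum>j\<in>UNIV. \<bar>gi$i$j\<bar>)"
  define qm where "qm = (\<Sum>i\<in>UNIV. \<Sum>j\<in>UNIV. \<bar>Q$i$j\<bar>)"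
  have qm0: "0 \<le> qm" unfolding qm_def by (intro sum_nonneg) auto
  have K1: "1 \<le> K" unfolding K_def by (simp add: sum_nonneg)
  have qmb: "\<forall>i j. \<bar>Q$i$j\<bar> \<le> qm" unfolding qm_def using sum9_ge by blast
  have zK: "\<bar>(gi *v v)$i\<bar> \<le> K * supn v" for v i
  proof -
    have "0 \<le> supn v" using supn_ge[of v 1] by linarith
    then show ?thesis using mv_bound[of gi v i] unfolding K_def by (simp add: algebra_simps)
  qed
  define \<eta>1 where "\<eta>1 = 1/(2592*(36*qm+1)^2*K^16)"
  define \<eta>3 where "\<eta>3 = c*((576 * K^10) powr (-M))/(1480*(qm+1)^3*K^4)"
  define \<eta> where "\<eta> = min (1/2) (min \<eta>1 \<eta>3)"
  have \<eta>1p: "0 < \<eta>1" unfolding \<eta>1_def using qm0 K1 by simp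
  have \<eta>3p: "0 < \<eta>3" unfolding \<eta>3_def using qm0 K1 c0 by simp
  have \<eta>0: "0 < \<eta>" unfolding \<eta>_def using \<eta>1p \<eta>3p by simp
  have \<eta>le: "\<eta> \<le> \<eta>1" "\<eta> \<le> \<eta>3" "\<eta> < 1" unfolding \<eta>_def by auto
  show ?thesis
  proof (rule exI[of _ \<eta>], intro conjI allI impI)
    show "0 < \<eta>" by (rule \<eta>0)
    show "\<eta> < 1" by (rule \<eta>le(3))
    fix R :: real assume R: "R > 10"
    define S where "S = {v \<in> lattice_of g \<inter> H_set \<eta> M. R \<le> supn v \<and> supn v < R^2}"
    define Zb where "Zb = K * R^2"
    define \<epsilon> where "\<epsilon> = \<eta> * R powr (- 50 * M)"
    note sm = smallness[OF K1 qm0 R M c0 \<eta>0 \<eta>le(1)[unfolded \<eta>1_def] \<eta>le(2)[unfolded \<eta>3_def] Zb_def \<epsilon>_def]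
    define zf where "zf v = gi *v v" for v
    have memS: "intv (zf v) \<and> vb (zf v) Zb \<and> \<bar>qf Q (zf v)\<bar> \<le> \<epsilon> \<and> g *v zf v = v \<and> v \<noteq> 0" if "v \<in> S" for v
    proof -
      from that obtain z where z: "v = g *v z" "\<forall>i. z$i \<in> \<int>" and H: "v \<in> H_set \<eta> M"
        and sv: "R \<le> supn v" "supn v < R^2"
        unfolding S_def lattice_of_def by auto
      have zz: "zf v = z" unfolding zf_def z(1) matrix_vector_mul_assoc gi by simp
      have iv: "intv (zf v)" unfolding zz intv_def using z(2) .
      have vbz: "vb (zf v) Zb" unfolding vb_def
      proof
        fix i
        have "\<bar>zf v $ i\<bar> \<le> K * supn v" unfolding zf_def by (rule zK)
        also have "\<dots> \<le> K * R^2" using sv(2) K1 by simp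
        finally show "\<bar>zf v $ i\<bar> \<le> Zb" unfolding Zb_def .
      qed
      have "qf Q (zf v) = Q0 v" unfolding zz using qQ z(1) by simp
      moreover have "\<bar>Q0 v\<bar> < \<eta> * supn v powr (- 50 * M)" using H unfolding H_set_def by simp
      moreover have "supn v powr (- 50 * M) \<le> R powr (- 50 * M)"
        by (rule powr_mono2') (use M R sv(1) in auto)
      ultimately have "\<bar>qf Q (zf v)\<bar> \<le> \<epsilon>" unfolding \<epsilon>_def using \<eta>0
        by (smt (verit) mult_left_mono)
      moreover have "g *v zf v = v" using zz z(1) by simp
      moreover have "v \<noteq> 0" using sv(1) R supn_zero by auto
      ultimately show ?thesis using iv vbz by blast
    qed
    have nlz: "\<forall>t. zf a \<noteq> t *\<^sub>R zf b" if "nl a b" "a \<in> S" "b \<in> S" for a b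
    proof (intro allI notI)
      fix t assume "zf a = t *\<^sub>R zf b"
      then have "g *v zf a = t *\<^sub>R (g *v zf b)" by (simp add: matrix_vector_mult_scaleR)
      then have "a = t *\<^sub>R b" using memS[OF that(2)] memS[OF that(3)] by simp
      then show False using that(1) unfolding nl_def by blast
    qed
    have tri: "det3 (zf a) (zf b) (zf c) \<noteq> 0"
      if "a \<in> S" "b \<in> S" "c \<in> S" "nl a b" "nl b a" "nl c a" "nl c b" for a b c
    proof
      assume d0: "det3 (zf a) (zf b) (zf c) = 0"
      have "1 \<le> 6 * (216*Zb^8*\<epsilon>) * (36*qm*Zb^4 + 216*Zb^8*\<epsilon>) * (36*qm*Zb^4 + 216*Zb^8*\<epsilon>)"
        by (rule step1[OF symQ dQ qmb sm(5)])
          (use memS[OF that(1)] memS[OF that(2)] memS[OF that(3)] nlz that d0 in auto)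
      then show False using sm(1) by linarith
    qed
    have five: False if "a1 \<in> S" "a2 \<in> S" "a3 \<in> S" "a4 \<in> S" "a5 \<in> S"
      "\<forall>x\<in>{a1,a2,a3,a4,a5}. \<forall>y\<in>{a1,a2,a3,a4,a5}. x \<noteq> y \<longrightarrow> nl x y"
      "distinct [a1,a2,a3,a4,a5]" for a1 a2 a3 a4 a5
    proof -
      have n: "nl x y" if "x \<in> {a1,a2,a3,a4,a5}" "y \<in> {a1,a2,a3,a4,a5}" "x \<noteq> y" for x y
        using that \<open>\<forall>x\<in>{a1,a2,a3,a4,a5}. \<forall>y\<in>{a1,a2,a3,a4,a5}. x \<noteq> y \<longrightarrow> nl x y\<close> by blast
      have dist: "a1 \<noteq> a2" "a1 \<noteq> a3" "a1 \<noteq> a4" "a1 \<noteq> a5" "a2 \<noteq> a3" "a2 \<noteq> a4" "a2 \<noteq> a5"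
        "a3 \<noteq> a4" "a3 \<noteq> a5" "a4 \<noteq> a5" using that(7) by auto
      have T: "det3 (zf x) (zf y) (zf w) \<noteq> 0"
        if "x \<in> {a1,a2,a3,a4,a5}" "y \<in> {a1,a2,a3,a4,a5}" "w \<in> {a1,a2,a3,a4,a5}"
          "x \<noteq> y" "x \<noteq> w" "y \<noteq> w" for x y w
      proof (rule tri)
        show "x \<in> S" "y \<in> S" "w \<in> S" using that(1-3) \<open>a1 \<in> S\<close> \<open>a2 \<in> S\<close> \<open>a3 \<in> S\<close> \<open>a4 \<in> S\<close> \<open>a5 \<in> S\<close> by auto
        show "nl x y" "nl y x" "nl w x" "nl w y" using n that by auto
      qed
      have t0: "det3 (zf a1) (zf a2) (zf a3) \<noteq> 0" by (rule T) (use dist in auto)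
      have t1: "det3 (zf a1) (zf a2) (zf a4) \<noteq> 0" by (rule T) (use dist in auto)
      have t2: "det3 (zf a1) (zf a2) (zf a5) \<noteq> 0" by (rule T) (use dist in auto)
      have t3: "det3 (zf a1) (zf a3) (zf a4) \<noteq> 0" by (rule T) (use dist in auto)
      have t4: "det3 (zf a1) (zf a3) (zf a5) \<noteq> 0" by (rule T) (use dist in auto)
      have t5: "det3 (zf a1) (zf a4) (zf a5) \<noteq> 0" by (rule T) (use dist in auto)
      have t6: "det3 (zf a2) (zf a3) (zf a4) \<noteq> 0" by (rule T) (use dist in auto)
      have t7: "det3 (zf a2) (zf a3) (zf a5) \<noteq> 0" by (rule T) (use dist in auto)
      have t8: "det3 (zf a2) (zf a4) (zf a5) \<noteq> 0" by (rule T) (use dist in auto)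
      have t9: "det3 (zf a3) (zf a4) (zf a5) \<noteq> 0" by (rule T) (use dist in auto)
      have ms: "intv (zf a) \<and> vb (zf a) Zb \<and> \<bar>qf Q (zf a)\<bar> \<le> \<epsilon>" if "a \<in> S" for a
        using memS[OF that] by blast
      have "\<exists>Q2. integral_form Q2 \<and> Q2 \<noteq> 0 \<and> qdet Q2 \<noteq> 0 \<and> qnorm Q2 \<le> 576*Zb^10 \<and>
         qnorm (Q - root 3 (inverse (qdet Q2)) *\<^sub>R Q2) \<le> 74*(qm+1)^3*(20*Zb^4*\<epsilon>)"
        by (rule step2[OF symQ dQ qmb qm0 sm(5)
          ms[OF that(1), THEN conjunct1] ms[OF that(2), THEN conjunct1] ms[OF that(3), THEN conjunct1]
          ms[OF that(4), THEN conjunct1] ms[OF that(5), THEN conjunct1]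
          ms[OF that(1), THEN conjunct2, THEN conjunct1] ms[OF that(2), THEN conjunct2, THEN conjunct1]
          ms[OF that(3), THEN conjunct2, THEN conjunct1] ms[OF that(4), THEN conjunct2, THEN conjunct1]
          ms[OF that(5), THEN conjunct2, THEN conjunct1]
          ms[OF that(1), THEN conjunct2, THEN conjunct2] ms[OF that(2), THEN conjunct2, THEN conjunct2]
          ms[OF that(3), THEN conjunct2, THEN conjunct2] ms[OF that(4), THEN conjunct2, THEN conjunct2]
          ms[OF that(5), THEN conjunct2, THEN conjunct2]
          t0 t1 t2 t3 t4 t5 t6 t7 t8 t9 sm(2) sm(3)])
      then obtain Q2 where Q2: "integral_form Q2" "Q2 \<noteq> 0" "qdet Q2 \<noteq> 0" "qnorm Q2 \<le> 576*Zb^10"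
        "qnorm (Q - root 3 (inverse (qdet Q2)) *\<^sub>R Q2) \<le> 74*(qm+1)^3*(20*Zb^4*\<epsilon>)" by blast
      have "c * qnorm Q2 powr (- M) < qnorm (Q - root 3 (inverse (qdet Q2)) *\<^sub>R Q2)"
        by (rule dioph[OF Q2(1-3)])
      moreover have "(576*Zb^10) powr (- M) \<le> qnorm Q2 powr (- M)"
        by (rule powr_mono2') (use M qnorm_pos[OF Q2(2)] Q2(4) in auto)
      then have "c * (576*Zb^10) powr (- M) \<le> c * qnorm Q2 powr (- M)"
        by (rule mult_left_mono) (use c0 in simp)
      ultimately show False using Q2(5) sm(4) by linarith
    qed
    define pw where "pw D \<longleftrightarrow> D \<subseteq> S \<and> finite D \<and> (\<forall>x\<in>D. \<forall>y\<in>D. x \<noteq> y \<longrightarrow> nl x y)" for D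
    have card4: "card D \<le> 4" if "pw D" for D
    proof (rule ccontr)
      assume "\<not> card D \<le> 4"
      then have c5: "5 \<le> card D" by simp
      have fD: "finite D" using that unfolding pw_def by simp
      obtain a b c d e where abc: "a \<in> D" "b \<in> D" "c \<in> D" "d \<in> D" "e \<in> D" "distinct [a,b,c,d,e]"
        using five_card[OF fD c5] by blast
      show False
      proof (rule five[of a b c d e])
        show "a \<in> S" "b \<in> S" "c \<in> S" "d \<in> S" "e \<in> S" using abc that unfolding pw_def by auto
        show "\<forall>x\<in>{a,b,c,d,e}. \<forall>y\<in>{a,b,c,d,e}. x \<noteq> y \<longrightarrow> nl x y" using abc that unfolding pw_def by blast
        show "distinct [a,b,c,d,e]" by (rule abc(6))
      qed
    qed
    define N where "N = Max (card ` {D. pw D})"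
    have finN: "finite (card ` {D. pw D})"
      by (rule finite_subset[of _ "{..4}"]) (auto simp: card4)
    have pw0: "pw {}" unfolding pw_def by simp
    have "N \<in> card ` {D. pw D}" unfolding N_def by (rule Max_in[OF finN]) (use pw0 in auto)
    then obtain D where D: "pw D" "card D = N" by auto
    have maxN: "card D' \<le> N" if "pw D'" for D'
      unfolding N_def by (rule Max_ge[OF finN]) (use that in auto)
    show "\<exists>D. finite D \<and> card D \<le> 12 \<and> (\<forall>d\<in>D. d \<noteq> 0) \<and>
       {v \<in> lattice_of g \<inter> H_set \<eta> M. R \<le> supn v \<and> supn v < R^2} \<subseteq> (\<Union>d\<in>D. line_through_origin d)"
    proof (intro exI conjI)
      show "finite D" using D(1) unfolding pw_def by simp
      show "card D \<le> 12" using card4[OF D(1)] by simp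
      show "\<forall>d\<in>D. d \<noteq> 0" using D(1) memS unfolding pw_def by blast
      show "{v \<in> lattice_of g \<inter> H_set \<eta> M. R \<le> supn v \<and> supn v < R^2} \<subseteq> (\<Union>d\<in>D. line_through_origin d)"
        unfolding S_def[symmetric]
      proof
        fix v assume vS: "v \<in> S"
        show "v \<in> (\<Union>d\<in>D. line_through_origin d)"
        proof (rule ccontr)
          assume nv: "v \<notin> (\<Union>d\<in>D. line_through_origin d)"
          have nvd: "nl v d" if "d \<in> D" for d
            using nv that unfolding nl_def line_through_origin_def by blast
          have ndv: "nl d v" if "d \<in> D" for d
            unfolding nl_def
          proof (intro allI notI)
            fix t assume dt: "d = t *\<^sub>R v"
            have "d \<noteq> 0" using that D(1) memS unfolding pw_def by blast
            then have "t \<noteq> 0" using dt by auto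
            then have "v = (1/t) *\<^sub>R d" using dt by simp
            then show False using nvd[OF that] unfolding nl_def by blast
          qed
          have vD: "v \<notin> D" using nvd unfolding nl_def by (metis scaleR_one)
          have "pw (insert v D)" using D(1) vS nvd ndv unfolding pw_def by auto
          then have "card (insert v D) \<le> N" by (rule maxN)
          moreover have "card (insert v D) = N + 1" using D vD unfolding pw_def by simp
          ultimately show False by simp
        qed
      qed
    qed
  qed
qed

end
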